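(* Let $Q$ be a subring of $\mathbb{R}$ containing $1$, let $R = Q \times Q$ with coordinatewise addition and multiplication $(a,b)\cdot(c,d) = (ac, ad + bc)$, and consider the Frobenius template $(A(Q), C(Q), U(Q))$ in $R$, where $A(Q) = (Q \cap (0,\infty)) \times (Q \cap [0,\infty))$ and $C(Q) = U(Q) = (Q \cap [0,\infty))^2$. Let $n$ be a positive integer and let $(\alpha_1, \dots, \alpha_n)$ be a list in $A(Q) \setminus (Q \times \{0\})$ (i.e. $\alpha_i = (a_i, b_i)$ with $a_i > 0$ and $b_i > 0$ for all $i$). Then $\mathrm{Frob}(\alpha_1, \dots, \alpha_n) = \emptyset$.
   Context: $R$ is isomorphic to the ring of upper triangular $2\times 2$ matrices over $Q$ with constant diagonal, and is commutative. For a list $(\alpha_1,\dots,\alpha_n)$ in $A(Q)$, $MN(\alpha_1, \dots, \alpha_n) = \{\sum_{i=1}^n \alpha_i \lambda_i : \lambda_1, \dots, \lambda_n \in C(Q)\}$ (product in $R$), and $\mathrm{Frob}(\alpha_1, \dots, \alpha_n) = \{w \in R : w + U(Q) \subseteq MN(\alpha_1, \dots, \alpha_n)\}$, where $w + U(Q) = \{w + u : u \in U(Q)\}$. *)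

theory Defs
  imports Main "HOL.Real"
begin

definition subring_one :: "real set \<Rightarrow> bool" where
  "subring_one Q \<longleftrightarrow> 1 \<in> Q \<and> (\<forall>x\<in>Q. \<forall>y\<in>Q. x + y \<in> Q \<and> x - y \<in> Q \<and> x * y \<in> Q)"

definition Rcar :: "real set \<Rightarrow> (real \<times> real) set" where
  "Rcar Q = Q \<times> Q"

definition radd :: "real \<times> real \<Rightarrow> real \<times> real \<Rightarrow> real \<times> real" where
  "radd x y = (fst x + fst y, snd x + snd y)"

definition rmul :: "real \<times> real \<Rightarrow> real \<times> real \<Rightarrow> real \<times> real" where
  "rmul x y = (fst x * fst y, fst x * snd y + snd x * fst y)"

definition rzero :: "real \<times> real" where "rzero = (0, 0)"

definition Aset :: "real set \<Rightarrow> (real \<times> real) set" where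
  "Aset Q = {x \<in> Q. 0 < x} \<times> {x \<in> Q. 0 \<le> x}"

definition Cset :: "real set \<Rightarrow> (real \<times> real) set" where
  "Cset Q = {x \<in> Q. 0 \<le> x} \<times> {x \<in> Q. 0 \<le> x}"

definition Uset :: "real set \<Rightarrow> (real \<times> real) set" where
  "Uset Q = {x \<in> Q. 0 \<le> x} \<times> {x \<in> Q. 0 \<le> x}"

definition MN :: "real set \<Rightarrow> (real \<times> real) list \<Rightarrow> (real \<times> real) set" where
  "MN Q \<alpha>s = {foldr radd (map2 rmul \<alpha>s lams) rzero | lams.
      length lams = length \<alpha>s \<and> set lams \<subseteq> Cset Q}"

definition Frob :: "real set \<Rightarrow> (real \<times> real) list \<Rightarrow> (real \<times> real) set" where
  "Frob Q \<alpha>s = {w \<in> Rcar Q. (\<lambda>u. radd w u) ` Uset Q \<subseteq> MN Q \<alpha>s}"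

end

theory Submission
  imports Defs
begin

lemma MN_bound:
  assumes "\<forall>p\<in>set as. 0 < fst p \<and> m * fst p \<le> snd p" "m \<ge> 0"
    and "length lams = length as" "set lams \<subseteq> Cset Q"
  shows "m * fst (foldr radd (map2 rmul as lams) rzero) \<le> snd (foldr radd (map2 rmul as lams) rzero)"
  using assms
proof (induction as arbitrary: lams)
  case Nil
  then show ?case by (simp add: rzero_def)
next
  case (Cons a as lams)
  then obtain l ls where l: "lams = l # ls" by (cases lams) auto
  with Cons.prems have ih: "m * fst (foldr radd (map2 rmul as ls) rzero) \<le> snd (foldr radd (map2 rmul as ls) rzero)"
    by (intro Cons.IH) auto
  have a: "0 < fst a" "m * fst a \<le> snd a" using Cons.prems by auto
  have lc: "0 \<le> fst l" "0 \<le> snd l" using Cons.prems l by (auto simp: Cset_def)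
  have "m * fst a * fst l \<le> snd a * fst l" using a lc mult_right_mono by blast
  moreover have "0 \<le> fst a * snd l" using a lc by simp
  ultimately have key: "m * fst (rmul a l) + m * fst (foldr radd (map2 rmul as ls) rzero)
     \<le> snd (rmul a l) + snd (foldr radd (map2 rmul as ls) rzero)"
    using ih unfolding rmul_def by (simp add: algebra_simps)
  have eq: "foldr radd (map2 rmul (a # as) lams) rzero = radd (rmul a l) (foldr radd (map2 rmul as ls) rzero)"
    using l by simp
  show ?case unfolding eq using key by (simp only: radd_def fst_conv snd_conv distrib_left)
qed

lemma nat_in_Q:
  assumes "subring_one Q" shows "real k \<in> Q"
proof (induction k)
  case 0
  have "1 - 1 \<in> Q" using assms unfolding subring_one_def by blast
  then show ?case by simp
next
  case (Suc k)
  then have "real k + 1 \<in> Q" using assms unfolding subring_one_def by blast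
  then show ?case by (simp add: add.commute)
qed

theorem proposition4p1:
  fixes Q :: "real set" and \<alpha>s :: "(real \<times> real) list" and n :: nat
  assumes "subring_one Q"
    and "n \<ge> 1" and "length \<alpha>s = n"
    and "set \<alpha>s \<subseteq> Aset Q - (Q \<times> {0})"
  shows "Frob Q \<alpha>s = {}"
proof (rule ccontr)
  assume "Frob Q \<alpha>s \<noteq> {}"
  then obtain w where w: "w \<in> Frob Q \<alpha>s" by blast
  define S where "S = (\<lambda>p. snd p / fst p) ` set \<alpha>s"
  have ne: "set \<alpha>s \<noteq> {}" using assms(2,3) by auto
  define m where "m = Min S"
  have pos: "\<forall>p\<in>set \<alpha>s. 0 < fst p \<and> 0 < snd p"
    using assms(4) by (force simp: Aset_def)
  have Sfin: "finite S" "S \<noteq> {}" using ne by (auto simp: S_def)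
  have mpos: "m > 0" unfolding m_def using Sfin pos
    by (subst Min_gr_iff) (auto simp: S_def)
  have bnd: "\<forall>p\<in>set \<alpha>s. 0 < fst p \<and> m * fst p \<le> snd p"
  proof
    fix p assume p: "p \<in> set \<alpha>s"
    then have "m \<le> snd p / fst p" unfolding m_def using Sfin by (auto simp: S_def)
    then show "0 < fst p \<and> m * fst p \<le> snd p" using pos p by (simp add: pos_le_divide_eq)
  qed
  obtain k :: nat where k: "(snd w - m * fst w) / m < real k" using reals_Archimedean2 by blast
  have "(real k, 0) \<in> Uset Q" using nat_in_Q[OF assms(1), of k] nat_in_Q[OF assms(1), of 0]
    by (simp add: Uset_def)
  then have "radd w (real k, 0) \<in> MN Q \<alpha>s" using w by (auto simp: Frob_def)
  then obtain lams where L: "length lams = length \<alpha>s" "set lams \<subseteq> Cset Q"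
     "radd w (real k, 0) = foldr radd (map2 rmul \<alpha>s lams) rzero" by (auto simp: MN_def)
  have "m * fst (radd w (real k, 0)) \<le> snd (radd w (real k, 0))"
    unfolding L(3) using MN_bound[OF bnd _ L(1,2)] mpos by simp
  then have "m * (fst w + real k) \<le> snd w" by (simp add: radd_def)
  moreover have "snd w - m * fst w < m * real k" using k mpos by (simp add: pos_divide_less_eq mult.commute)
  ultimately show False by (simp add: algebra_simps)
qed

end
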